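(* Let $j,k\geq 2$ and $i\geq k+4$ be integers. Then $$R_k^{\mathcal{CA}}(i,j)=j-1+\Big\lceil\frac{j-1}{k}\Big\rceil,$$ where $\mathcal{CA}$ is the class of cacti.
   Context: All graphs are finite and simple. For a graph $G$ and a nonnegative integer $k$, a $k$-sparse $j$-set is a set of $j$ vertices of $G$ inducing a subgraph of maximum degree at most $k$; a $k$-dense $i$-set is a set of $i$ vertices of $G$ that is $k$-sparse in the complement of $G$. For a graph class $\mathcal{G}$, $R_k^{\mathcal{G}}(i,j)$ is the smallest natural number $n$ such that every graph on $n$ vertices in $\mathcal{G}$ has either a $k$-dense $i$-set or a $k$-sparse $j$-set. A cactus is a graph (not necessarily connected) in which every block is a cycle, a single edge, or a single vertex. *)

theory Defs
  imports Complex_Main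
begin

definition simple_graph :: "'a set \<Rightarrow> ('a \<Rightarrow> 'a \<Rightarrow> bool) \<Rightarrow> bool" where
  "simple_graph V E \<longleftrightarrow> finite V \<and> (\<forall>x y. E x y \<longrightarrow> x \<in> V \<and> y \<in> V \<and> x \<noteq> y \<and> E y x)"

text \<open>The induced subgraph on S is connected (the empty set counts as connected).\<close>
definition connected_on :: "('a \<Rightarrow> 'a \<Rightarrow> bool) \<Rightarrow> 'a set \<Rightarrow> bool" where
  "connected_on E S \<longleftrightarrow>
     (\<forall>u\<in>S. \<forall>v\<in>S. (\<lambda>x y. x \<in> S \<and> y \<in> S \<and> E x y)\<^sup>*\<^sup>* u v)"

definition biconnected_on :: "('a \<Rightarrow> 'a \<Rightarrow> bool) \<Rightarrow> 'a set \<Rightarrow> bool" where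
  "biconnected_on E S \<longleftrightarrow> connected_on E S \<and> (\<forall>v\<in>S. connected_on E (S - {v}))"

text \<open>A block: a maximal nonempty vertex set whose induced subgraph is connected
without cut vertex (blocks are induced subgraphs).\<close>
definition is_block :: "'a set \<Rightarrow> ('a \<Rightarrow> 'a \<Rightarrow> bool) \<Rightarrow> 'a set \<Rightarrow> bool" where
  "is_block V E B \<longleftrightarrow> B \<noteq> {} \<and> B \<subseteq> V \<and> biconnected_on E B \<and>
     (\<forall>B'. B \<subseteq> B' \<and> B' \<subseteq> V \<and> biconnected_on E B' \<longrightarrow> B' = B)"

definition is_cycle_on :: "('a \<Rightarrow> 'a \<Rightarrow> bool) \<Rightarrow> 'a set \<Rightarrow> bool" where
  "is_cycle_on E B \<longleftrightarrow> finite B \<and> card B \<ge> 3 \<and> connected_on E B \<and>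
     (\<forall>v\<in>B. card {u\<in>B. E v u} = 2)"

definition cactus :: "'a set \<Rightarrow> ('a \<Rightarrow> 'a \<Rightarrow> bool) \<Rightarrow> bool" where
  "cactus V E \<longleftrightarrow> simple_graph V E \<and>
     (\<forall>B. is_block V E B \<longrightarrow>
        is_cycle_on E B \<or> (\<exists>x y. B = {x, y} \<and> E x y) \<or> (\<exists>x. B = {x}))"

definition k_sparse :: "('a \<Rightarrow> 'a \<Rightarrow> bool) \<Rightarrow> nat \<Rightarrow> 'a set \<Rightarrow> bool" where
  "k_sparse E k S \<longleftrightarrow> (\<forall>v\<in>S. card {u\<in>S. E v u} \<le> k)"

text \<open>k-dense set: k-sparse in the complement graph.\<close>
definition k_dense :: "('a \<Rightarrow> 'a \<Rightarrow> bool) \<Rightarrow> nat \<Rightarrow> 'a set \<Rightarrow> bool" where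
  "k_dense E k S \<longleftrightarrow> (\<forall>v\<in>S. card {u\<in>S. u \<noteq> v \<and> \<not> E v u} \<le> k)"

text \<open>R_k^C(i,j) for a graph class C (an isomorphism-invariant predicate);
graphs on n vertices are taken with vertex set {0..<n}.\<close>
definition ramsey_class ::
  "(nat set \<Rightarrow> (nat \<Rightarrow> nat \<Rightarrow> bool) \<Rightarrow> bool) \<Rightarrow> nat \<Rightarrow> nat \<Rightarrow> nat \<Rightarrow> nat" where
  "ramsey_class C k i j = (LEAST n. \<forall>E. simple_graph {..<n} E \<and> C {..<n} E \<longrightarrow>
      (\<exists>S\<subseteq>{..<n}. card S = i \<and> k_dense E k S) \<or>
      (\<exists>S\<subseteq>{..<n}. card S = j \<and> k_sparse E k S))"

end

theory Submission
  imports Defs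
begin


definition conn :: "('a \<Rightarrow> 'a \<Rightarrow> bool) \<Rightarrow> 'a set \<Rightarrow> 'a \<Rightarrow> 'a \<Rightarrow> bool" where
  "conn E X = (\<lambda>x y. x \<in> X \<and> y \<in> X \<and> E x y)\<^sup>*\<^sup>*"

lemma connected_on_conn: "connected_on E S \<longleftrightarrow> (\<forall>u\<in>S. \<forall>v\<in>S. conn E S u v)"
  unfolding connected_on_def conn_def by simp

lemma conn_refl[simp]: "conn E X a a"
  unfolding conn_def by simp

lemma conn_edge: "x \<in> X \<Longrightarrow> y \<in> X \<Longrightarrow> E x y \<Longrightarrow> conn E X x y"
  unfolding conn_def by (simp add: r_into_rtranclp)

lemma conn_trans: "conn E X a b \<Longrightarrow> conn E X b c \<Longrightarrow> conn E X a c"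
  unfolding conn_def by (rule rtranclp_trans)

lemma conn_mono: "conn E X a b \<Longrightarrow> X \<subseteq> Y \<Longrightarrow> conn E Y a b"
  unfolding conn_def
  by (erule rtranclp_mono[THEN predicate2D, rotated]) auto

lemma conn_sym:
  assumes "\<And>x y. E x y \<Longrightarrow> E y x" "conn E X a b" shows "conn E X b a"
  using assms(2) unfolding conn_def
proof (induction rule: rtranclp_induct)
  case base then show ?case by simp
next
  case (step y z)
  have "(\<lambda>x y. x \<in> X \<and> y \<in> X \<and> E x y) z y" using step.hyps(2) assms(1) by auto
  then show ?case using step.IH by (rule converse_rtranclp_into_rtranclp)
qed

lemma conn_in: "conn E X a b \<Longrightarrow> a \<noteq> b \<Longrightarrow> b \<in> X"
  unfolding conn_def by (induction rule: rtranclp_induct) auto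

lemma conn_in1: "conn E X a b \<Longrightarrow> a \<noteq> b \<Longrightarrow> a \<in> X"
  unfolding conn_def by (induction rule: converse_rtranclp_induct) auto

lemma conn_boundary:
  assumes "conn E X a b" "a \<in> A" "b \<notin> A"
  shows "\<exists>s t. s \<in> A \<and> t \<notin> A \<and> s \<in> X \<and> t \<in> X \<and> E s t"
  using assms unfolding conn_def
  by (induction rule: rtranclp_induct) auto

lemma conn_restrict:
  assumes "conn E X a b" "\<And>y. conn E X a y \<Longrightarrow> y \<in> Y"
  shows "conn E (X \<inter> Y) a b"
  using assms unfolding conn_def
proof (induction rule: rtranclp_induct)
  case base then show ?case by simp
next
  case (step y z)
  have "y \<in> Y" using step.prems step.hyps(1) by blast
  moreover have "z \<in> Y"
  proof -
    have "(\<lambda>x y. x \<in> X \<and> y \<in> X \<and> E x y)\<^sup>*\<^sup>* a z"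
      using step.hyps by (simp add: rtranclp.rtrancl_into_rtrancl)
    then show ?thesis using step.prems by blast
  qed
  ultimately show ?case using step by (simp add: rtranclp.rtrancl_into_rtrancl)
qed

lemma conn_cong:
  assumes "\<And>x y. x \<in> X \<Longrightarrow> y \<in> X \<Longrightarrow> E x y = E' x y"
  shows "conn E X = conn E' X"
proof -
  have "(\<lambda>x y. x \<in> X \<and> y \<in> X \<and> E x y) = (\<lambda>x y. x \<in> X \<and> y \<in> X \<and> E' x y)"
    using assms by (intro ext) auto
  then show ?thesis unfolding conn_def by simp
qed

lemma connected_on_cong:
  assumes "\<And>x y. x \<in> X \<Longrightarrow> y \<in> X \<Longrightarrow> E x y = E' x y"
  shows "connected_on E X = connected_on E' X"
  using conn_cong[of X E E'] assms unfolding connected_on_conn by simp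

lemma biconnected_on_cong:
  assumes "\<And>x y. x \<in> X \<Longrightarrow> y \<in> X \<Longrightarrow> E x y = E' x y"
  shows "biconnected_on E X = biconnected_on E' X"
proof -
  have "\<And>v. connected_on E (X - {v}) = connected_on E' (X - {v})"
    by (rule connected_on_cong) (use assms in auto)
  then show ?thesis unfolding biconnected_on_def using connected_on_cong[of X E E'] assms by simp
qed

lemma is_cycle_on_cong:
  assumes "\<And>x y. x \<in> X \<Longrightarrow> y \<in> X \<Longrightarrow> E x y = E' x y"
  shows "is_cycle_on E X = is_cycle_on E' X"
proof -
  have "\<And>v. v \<in> X \<Longrightarrow> {u\<in>X. E v u} = {u\<in>X. E' v u}" using assms by auto
  then show ?thesis unfolding is_cycle_on_def using connected_on_cong[of X E E'] assms by auto
qed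

lemma comp_connected:
  assumes sym: "\<And>x y. E x y \<Longrightarrow> E y x"
  shows "connected_on E {w \<in> X. conn E X p w}"
  unfolding connected_on_conn
proof (intro ballI)
  fix u v assume u: "u \<in> {w \<in> X. conn E X p w}" and v: "v \<in> {w \<in> X. conn E X p w}"
  have "conn E X u v" using u v conn_sym[OF sym] conn_trans by fast
  moreover have "\<And>y. conn E X u y \<Longrightarrow> y \<in> {w \<in> X. conn E X p w}"
  proof -
    fix y assume "conn E X u y"
    then have "conn E X p y" using u conn_trans by fast
    moreover have "y \<in> X"
      using \<open>conn E X u y\<close> u conn_in by fastforce
    ultimately show "y \<in> {w \<in> X. conn E X p w}" by simp
  qed
  ultimately have "conn E (X \<inter> {w \<in> X. conn E X p w}) u v" by (rule conn_restrict)
  then show "conn E {w \<in> X. conn E X p w} u v" by (rule conn_mono) auto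
qed


definition cacP :: "('a \<Rightarrow> 'a \<Rightarrow> bool) \<Rightarrow> 'a set \<Rightarrow> bool" where
  "cacP E V \<longleftrightarrow> (\<forall>B. B \<subseteq> V \<and> biconnected_on E B \<and> 3 \<le> card B \<longrightarrow> is_cycle_on E B)"

lemma conn_nbr:
  assumes "conn E X a b" "a \<noteq> b"
  shows "\<exists>t. t \<in> X \<and> t \<noteq> a \<and> E a t"
proof -
  from conn_boundary[OF assms(1), of "{a}"] assms(2)
  obtain s t where "s \<in> {a}" "t \<notin> {a}" "s \<in> X" "t \<in> X" "E s t" by auto
  then show ?thesis by auto
qed

lemma min_deg2:
  assumes bic: "biconnected_on E B" and fin: "finite B" and c3: "3 \<le> card B" and x: "x \<in> B"
  shows "2 \<le> card {u\<in>B. E x u}"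
proof -
  have con: "connected_on E B" and con2: "\<And>v. v \<in> B \<Longrightarrow> connected_on E (B - {v})"
    using bic unfolding biconnected_on_def by auto
  obtain y where y: "y \<in> B" "y \<noteq> x"
  proof -
    have "card (B - {x}) \<ge> 2" using c3 x fin by simp
    then have "B - {x} \<noteq> {}" by (metis card.empty not_numeral_le_zero)
    then show ?thesis using that by blast
  qed
  have "conn E B x y" using con x y unfolding connected_on_conn by blast
  then obtain u1 where u1: "u1 \<in> B" "u1 \<noteq> x" "E x u1" using conn_nbr y(2) by metis
  obtain w where w: "w \<in> B" "w \<noteq> x" "w \<noteq> u1"
  proof -
    have "card (B - {x, u1}) \<ge> 1" using c3 x u1 fin
      by (simp add: card_Diff_subset)
    then have "B - {x, u1} \<noteq> {}" by (metis card.empty not_one_le_zero)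
    then show ?thesis using that by blast
  qed
  have "conn E (B - {u1}) x w" using con2[OF u1(1)] x w u1 unfolding connected_on_conn by blast
  then obtain u2 where u2: "u2 \<in> B - {u1}" "u2 \<noteq> x" "E x u2" using conn_nbr w(2) by metis
  have "{u1, u2} \<subseteq> {u\<in>B. E x u}" using u1 u2 by auto
  moreover have "card {u1, u2} = 2" using u2 by auto
  ultimately show ?thesis using fin
    by (metis (no_types, lifting) card_mono finite_subset mem_Collect_eq subsetI)
qed

lemma block_exists:
  assumes "finite V" "B \<subseteq> V" "biconnected_on E B" "B \<noteq> {}"
  shows "\<exists>B'. is_block V E B' \<and> B \<subseteq> B'"
proof -
  let ?F = "{B'. B \<subseteq> B' \<and> B' \<subseteq> V \<and> biconnected_on E B'}"
  have "?F \<subseteq> Pow V" by auto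
  then have finF: "finite ?F" using assms(1) finite_subset by blast
  have "B \<in> ?F" using assms by auto
  then have "card ` ?F \<noteq> {}" by auto
  then have "Max (card ` ?F) \<in> card ` ?F" using finF by (intro Max_in) auto
  then obtain Bm where Bm: "Bm \<in> ?F" "card Bm = Max (card ` ?F)" by auto
  have maxc: "\<And>B'. B' \<in> ?F \<Longrightarrow> card B' \<le> card Bm"
    using Bm(2) finF by simp
  have "is_block V E Bm"
    unfolding is_block_def
  proof (intro conjI allI impI)
    show "Bm \<noteq> {}" using Bm(1) assms(4) by auto
    show "Bm \<subseteq> V" "biconnected_on E Bm" using Bm(1) by auto
    fix B' assume B': "Bm \<subseteq> B' \<and> B' \<subseteq> V \<and> biconnected_on E B'"
    then have "B' \<in> ?F" using Bm(1) by auto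
    then have "card B' \<le> card Bm" by (rule maxc)
    moreover have "finite B'" using B' assms(1) finite_subset by blast
    ultimately show "B' = Bm" using B' by (metis card_seteq)
  qed
  then show ?thesis using Bm(1) by auto
qed

lemma cactus_cacP:
  assumes cac: "cactus V E"
  shows "cacP E V"
  unfolding cacP_def
proof (intro allI impI)
  fix B assume B: "B \<subseteq> V \<and> biconnected_on E B \<and> 3 \<le> card B"
  have sg: "simple_graph V E" using cac unfolding cactus_def by auto
  then have finV: "finite V" and sym: "\<And>x y. E x y \<Longrightarrow> E y x" unfolding simple_graph_def by auto
  have finB: "finite B" using B finV finite_subset by blast
  have "B \<noteq> {}" using B by auto
  then obtain Bs where Bs: "is_block V E Bs" "B \<subseteq> Bs" using block_exists[OF finV] B by blast
  have finBs: "finite Bs" using Bs(1) finV unfolding is_block_def using finite_subset by blast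
  have "card B \<le> card Bs" using Bs(2) finBs by (rule card_mono[rotated])
  then have c3: "3 \<le> card Bs" using B by simp
  have "is_cycle_on E Bs \<or> (\<exists>x y. Bs = {x, y} \<and> E x y) \<or> (\<exists>x. Bs = {x})"
    using cac Bs(1) unfolding cactus_def by blast
  moreover have "\<not> (\<exists>x y. Bs = {x, y})"
  proof
    assume "\<exists>x y. Bs = {x, y}"
    then obtain x y where "Bs = {x,y}" by blast
    then have "card Bs \<le> 2" by (simp add: card_insert_le_m1)
    then show False using c3 by simp
  qed
  ultimately have cyc: "is_cycle_on E Bs" by fastforce
  have eq: "B = Bs"
  proof (rule ccontr)
    assume "B \<noteq> Bs"
    then obtain w where w: "w \<in> Bs" "w \<notin> B" using Bs(2) by blast
    obtain b where b: "b \<in> B" using B by fastforce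
    have "connected_on E Bs" using cyc unfolding is_cycle_on_def by auto
    then have "conn E Bs b w" using b w Bs(2) unfolding connected_on_conn by blast
    from conn_boundary[OF this, of B] b w obtain s t where
      st: "s \<in> B" "t \<notin> B" "s \<in> Bs" "t \<in> Bs" "E s t" by blast
    have bicB: "biconnected_on E B" using B by auto
    have "2 \<le> card {u\<in>B. E s u}" using min_deg2[OF bicB finB] B st(1) by auto
    moreover have "insert t {u\<in>B. E s u} \<subseteq> {u\<in>Bs. E s u}" using st Bs(2) by auto
    moreover have "card (insert t {u\<in>B. E s u}) = Suc (card {u\<in>B. E s u})"
      using st(2) finB by simp
    moreover have "card {u\<in>Bs. E s u} = 2" using cyc st(3) unfolding is_cycle_on_def by auto
    moreover have "finite {u\<in>Bs. E s u}" using finBs by simp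
    ultimately show False by (metis card_mono not_less_eq_eq)
  qed
  show "is_cycle_on E B" using eq cyc by simp
qed

lemma cacP_cactus:
  assumes sg: "simple_graph V E" and cp: "cacP E V"
  shows "cactus V E"
  unfolding cactus_def
proof (intro conjI allI impI)
  show "simple_graph V E" by (rule sg)
  fix B assume blk: "is_block V E B"
  have finV: "finite V" using sg unfolding simple_graph_def by auto
  have B: "B \<noteq> {}" "B \<subseteq> V" "biconnected_on E B" using blk unfolding is_block_def by auto
  have finB: "finite B" using B finV finite_subset by blast
  have "card B \<ge> 1" using B finB by (simp add: Suc_leI card_gt_0_iff)
  then consider "card B = 1" | "card B = 2" | "3 \<le> card B" by linarith
  then show "is_cycle_on E B \<or> (\<exists>x y. B = {x, y} \<and> E x y) \<or> (\<exists>x. B = {x})"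
  proof cases
    case 1 then show ?thesis by (auto simp: card_1_singleton_iff)
  next
    case 2
    then obtain x y where xy: "B = {x, y}" "x \<noteq> y" by (auto simp: card_2_iff)
    have "connected_on E B" using B unfolding biconnected_on_def by auto
    then have "conn E B x y" using xy unfolding connected_on_conn by auto
    then obtain t where "t \<in> B" "t \<noteq> x" "E x t" using conn_nbr xy(2) by metis
    then have "E x y" using xy by auto
    then show ?thesis using xy by auto
  next
    case 3 then show ?thesis using cp B unfolding cacP_def by auto
  qed
qed


lemma factA_key:
  assumes sym: "\<And>x y. E x y \<Longrightarrow> E y x"
    and finV: "finite V"
    and FM: "M \<subseteq> V - {v}" "connected_on E M" "3 \<le> card {a\<in>M. E v a}"
    and minM: "\<And>M'. M' \<subseteq> V - {v} \<and> connected_on E M' \<and> 3 \<le> card {a\<in>M'. E v a} \<Longrightarrow> card M \<le> card M'"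
    and x: "x \<in> M" and u: "u \<in> M" "u \<noteq> x"
  shows "\<exists>a. conn E (M - {x}) u a \<and> E v a"
proof (rule ccontr)
  assume nex: "\<not> (\<exists>a. conn E (M - {x}) u a \<and> E v a)"
  define C where "C = {w. conn E (M - {x}) u w}"
  define M' where "M' = M - C"
  have finM: "finite M" using FM(1) finV finite_subset by blast
  have Csub: "C \<subseteq> M - {x}"
  proof
    fix w assume "w \<in> C"
    then have "conn E (M - {x}) u w" unfolding C_def by simp
    then show "w \<in> M - {x}" using u by (cases "u = w") (auto dest: conn_in)
  qed
  have xM': "x \<in> M'" using Csub x unfolding M'_def by auto
  have uC: "u \<in> C" unfolding C_def by simp
  have "M' \<subset> M" unfolding M'_def using uC u(1) by blast
  then have cardlt: "card M' < card M" using finM by (rule psubset_card_mono[rotated])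
  have nbr_eq: "{a\<in>M'. E v a} = {a\<in>M. E v a}"
    using nex unfolding M'_def C_def by auto
  have "connected_on E M'"
    unfolding connected_on_conn
  proof -
    have tox: "conn E M' y x" if y: "y \<in> M'" for y
    proof (cases "y = x")
      case True then show ?thesis by simp
    next
      case False
      have yM: "y \<in> M - {x}" "y \<notin> C" using y False unfolding M'_def by auto
      define Cy where "Cy = {w. conn E (M - {x}) y w}"
      have "conn E M y x" using FM(2) yM x unfolding connected_on_conn by blast
      moreover have "y \<in> Cy" unfolding Cy_def by simp
      moreover have "x \<notin> Cy" unfolding Cy_def using False by (auto dest: conn_in)
      ultimately obtain s t where st: "s \<in> Cy" "t \<notin> Cy" "s \<in> M" "t \<in> M" "E s t"
        using conn_boundary[of E M y x Cy] by blast
      have sMx: "s \<in> M - {x}" using st(1) yM unfolding Cy_def by (cases "y = s") (auto dest: conn_in)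
      have "t = x"
      proof (rule ccontr)
        assume "t \<noteq> x"
        then have "conn E (M - {x}) s t" using sMx st by (intro conn_edge) auto
        then have "t \<in> Cy" using st(1) unfolding Cy_def using conn_trans by fast
        then show False using st(2) by simp
      qed
      have disj: "Cy \<inter> C = {}"
      proof (rule ccontr)
        assume "Cy \<inter> C \<noteq> {}"
        then obtain w where yw: "conn E (M - {x}) y w" and uw: "conn E (M - {x}) u w" unfolding Cy_def C_def by auto
        have "conn E (M - {x}) u y" using conn_trans[OF uw conn_sym[OF sym yw]] .
        then show False using yM(2) unfolding C_def by simp
      qed
      have "conn E (M - {x}) y s" using st(1) unfolding Cy_def by simp
      moreover have "\<And>z. conn E (M - {x}) y z \<Longrightarrow> z \<in> M'"
      proof -
        fix z assume z: "conn E (M - {x}) y z"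
        then have "z \<in> Cy" unfolding Cy_def by simp
        then have "z \<notin> C" using disj by auto
        moreover have "z \<in> M - {x}" using z yM by (cases "y = z") (auto dest: conn_in)
        ultimately show "z \<in> M'" unfolding M'_def by auto
      qed
      ultimately have "conn E ((M - {x}) \<inter> M') y s" by (rule conn_restrict)
      then have "conn E M' y s" by (rule conn_mono) auto
      moreover have "s \<in> M'" using sMx st(1) disj unfolding M'_def by auto
      then have "conn E M' s x" using xM' st(5) \<open>t = x\<close> by (intro conn_edge) auto
      ultimately show ?thesis using conn_trans by fast
    qed
    show "\<forall>u\<in>M'. \<forall>w\<in>M'. conn E M' u w"
    proof (intro ballI)
      fix u w assume "u \<in> M'" "w \<in> M'"
      then show "conn E M' u w" using conn_trans[OF tox[of u] conn_sym[OF sym tox[of w]]] by simp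
    qed
  qed
  moreover have "M' \<subseteq> V - {v}" using FM(1) unfolding M'_def by auto
  ultimately have "card M \<le> card M'" using minM nbr_eq FM(3) by auto
  then show False using cardlt by simp
qed

lemma factA:
  assumes sym: "\<And>x y. E x y \<Longrightarrow> E y x"
    and finV: "finite V" and cp: "cacP E V" and v: "v \<in> V"
    and K: "K \<subseteq> V - {v}" "connected_on E K"
  shows "card {a\<in>K. E v a} \<le> 2"
proof (rule ccontr)
  assume "\<not> card {a\<in>K. E v a} \<le> 2"
  then have K3: "3 \<le> card {a\<in>K. E v a}" by simp
  let ?P = "\<lambda>M. M \<subseteq> V - {v} \<and> connected_on E M \<and> 3 \<le> card {a\<in>M. E v a}"
  have "?P K" using K K3 by simp
  from ex_has_least_nat[of ?P K card, OF this]
  obtain M where PM: "?P M" and minM: "\<And>M'. ?P M' \<Longrightarrow> card M \<le> card M'" by blast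
  have finM: "finite M" using PM finV finite_subset by blast
  have vM: "v \<notin> M" using PM by auto
  obtain a0 where a0: "a0 \<in> M" "E v a0"
  proof -
    have "{a\<in>M. E v a} \<noteq> {}" using PM by (metis card.empty not_numeral_le_zero)
    then show ?thesis using that by blast
  qed
  let ?B = "insert v M"
  have conM: "connected_on E M" using PM by simp
  have tov: "conn E ?B w v" if "w \<in> M" for w
  proof -
    have "conn E M w a0" using conM that a0 unfolding connected_on_conn by blast
    then have "conn E ?B w a0" by (rule conn_mono) auto
    moreover have "conn E ?B a0 v" using a0 sym by (intro conn_edge) auto
    ultimately show ?thesis using conn_trans by fast
  qed
  have bic: "biconnected_on E ?B"
    unfolding biconnected_on_def
  proof (intro conjI ballI)
    have tv: "conn E ?B w v" if "w \<in> ?B" for w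
      using that tov by (cases "w = v") auto
    show "connected_on E ?B"
      unfolding connected_on_conn
    proof (intro ballI)
      fix u w assume "u \<in> ?B" "w \<in> ?B"
      then show "conn E ?B u w" using conn_trans[OF tv[of u] conn_sym[OF sym tv[of w]]] by simp
    qed
  next
    fix x assume x: "x \<in> ?B"
    show "connected_on E (?B - {x})"
    proof (cases "x = v")
      case True
      then have "?B - {x} = M" using vM by auto
      then show ?thesis using conM by simp
    next
      case False
      then have xM: "x \<in> M" using x by simp
      have tov2: "conn E (?B - {x}) w v" if w: "w \<in> M" "w \<noteq> x" for w
      proof -
        have PM3: "M \<subseteq> V - {v}" "connected_on E M" "3 \<le> card {a\<in>M. E v a}" using PM by auto
        obtain a where a: "conn E (M - {x}) w a" "E v a"
          using factA_key[of E V M v x w, OF sym finV PM3 _ xM w(1) w(2)] minM by blast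
        have aM: "a \<in> M - {x}" using a(1) w by (cases "w = a") (auto dest: conn_in)
        have "conn E (?B - {x}) w a" using a(1) by (rule conn_mono) auto
        moreover have "conn E (?B - {x}) a v" using aM a(2) sym False by (intro conn_edge) auto
        ultimately show ?thesis using conn_trans by fast
      qed
      have tv: "conn E (?B - {x}) w v" if "w \<in> ?B - {x}" for w
        using that tov2 by (cases "w = v") auto
      show ?thesis unfolding connected_on_conn
      proof (intro ballI)
        fix u w assume "u \<in> ?B - {x}" "w \<in> ?B - {x}"
        then show "conn E (?B - {x}) u w" using conn_trans[OF tv[of u] conn_sym[OF sym tv[of w]]] by simp
      qed
    qed
  qed
  have "?B \<subseteq> V" using PM v by auto
  moreover have "3 \<le> card ?B"
  proof -
    have "card {a\<in>M. E v a} \<le> card M" using finM by (intro card_mono) auto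
    then show ?thesis using PM finM vM by simp
  qed
  ultimately have cyc: "is_cycle_on E ?B" using cp bic unfolding cacP_def by blast
  then have "card {u\<in>?B. E v u} = 2" unfolding is_cycle_on_def by auto
  moreover have "{a\<in>M. E v a} \<subseteq> {u\<in>?B. E v u}" by auto
  moreover have "finite {u\<in>?B. E v u}" using finM by simp
  ultimately have "card {a\<in>M. E v a} \<le> 2" by (metis card_mono)
  then show False using PM by simp
qed


definition nb :: "('a \<Rightarrow> 'a \<Rightarrow> bool) \<Rightarrow> 'a set \<Rightarrow> 'a \<Rightarrow> 'a set" where
  "nb E V u = {w \<in> V. E u w}"
definition dg :: "('a \<Rightarrow> 'a \<Rightarrow> bool) \<Rightarrow> 'a set \<Rightarrow> 'a \<Rightarrow> nat" where
  "dg E V u = card (nb E V u)"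
definition compo :: "('a \<Rightarrow> 'a \<Rightarrow> bool) \<Rightarrow> 'a set \<Rightarrow> 'a \<Rightarrow> 'a set" where
  "compo E X a = {w \<in> X. conn E X a w}"
definition hang :: "('a \<Rightarrow> 'a \<Rightarrow> bool) \<Rightarrow> 'a set \<Rightarrow> 'a \<Rightarrow> 'a \<Rightarrow> 'a set" where
  "hang E V p u = {w. \<exists>a \<in> V - {u}. E u a \<and> \<not> conn E (V - {u}) a p \<and> w \<in> compo E (V - {u}) a}"
definition good_red :: "('a \<Rightarrow> 'a \<Rightarrow> bool) \<Rightarrow> 'a set \<Rightarrow> nat \<Rightarrow> 'a \<Rightarrow> 'a set \<Rightarrow> bool" where
  "good_red E V k x W \<longleftrightarrow> x \<in> W \<and> W \<subseteq> V \<and> k + 1 \<le> card W \<and>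
     (\<forall>u \<in> W - {x}. dg E (V - {x}) u \<le> k) \<and>
     (\<forall>u \<in> V - W. (\<exists>w \<in> W - {x}. E u w) \<longrightarrow> dg E (V - {x}) u \<le> k)"

lemma dg_mono: "finite V \<Longrightarrow> dg E (V - {x}) u \<le> dg E V u"
  unfolding dg_def nb_def by (intro card_mono) auto

lemma dg_minus: "finite V \<Longrightarrow> x \<in> V \<Longrightarrow> E u x \<Longrightarrow> dg E (V - {x}) u = dg E V u - 1"
proof -
  assume "finite V" "x \<in> V" "E u x"
  then have "nb E (V - {x}) u = nb E V u - {x}" "x \<in> nb E V u" unfolding nb_def by auto
  then show ?thesis unfolding dg_def using \<open>finite V\<close> by (simp add: nb_def)
qed

lemma goodA:
  assumes finV: "finite V" and sym: "\<And>x y. E x y \<Longrightarrow> E y x"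
    and x: "x \<in> V" and Hs: "Hs \<subseteq> V - {x}" and low: "\<And>w. w \<in> Hs \<Longrightarrow> dg E V w \<le> k"
    and cl: "\<And>w y. w \<in> Hs \<Longrightarrow> y \<in> V \<Longrightarrow> E w y \<Longrightarrow> y = x \<or> y \<in> Hs"
    and c: "k \<le> card Hs"
  shows "good_red E V k x (insert x Hs)"
  unfolding good_red_def
proof (intro conjI ballI impI)
  show "x \<in> insert x Hs" "insert x Hs \<subseteq> V" using x Hs by auto
  have "finite Hs" using Hs finV finite_subset by blast
  moreover have "x \<notin> Hs" using Hs by auto
  ultimately show "k + 1 \<le> card (insert x Hs)" using c by simp
  fix u assume "u \<in> insert x Hs - {x}"
  then have "u \<in> Hs" by simp
  then show "dg E (V - {x}) u \<le> k" using low[of u] dg_mono[OF finV, of E x u] by simp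
next
  fix u assume u: "u \<in> V - insert x Hs" and "\<exists>w\<in>insert x Hs - {x}. E u w"
  then obtain w where "w \<in> Hs" "E u w" by auto
  then have "u = x \<or> u \<in> Hs" using cl u sym by blast
  then show "dg E (V - {x}) u \<le> k" using u by auto
qed

lemma good_combine:
  assumes finV: "finite V" and g: "good_red E V k x W"
    and S': "S' \<subseteq> V - W" "k_sparse E k S'"
  shows "k_sparse E k (S' \<union> (W - {x}))"
  unfolding k_sparse_def
proof
  fix u assume u: "u \<in> S' \<union> (W - {x})"
  let ?S = "S' \<union> (W - {x})"
  have SV: "?S \<subseteq> V - {x}" using S' g unfolding good_red_def by auto
  have bnd: "card {y\<in>?S. E u y} \<le> dg E (V - {x}) u"
    unfolding dg_def nb_def using SV finV by (intro card_mono) auto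
  show "card {y\<in>?S. E u y} \<le> k"
  proof (cases "u \<in> W - {x} \<or> (\<exists>w \<in> W - {x}. E u w)")
    case True
    then have "dg E (V - {x}) u \<le> k" using g u S' unfolding good_red_def by auto
    then show ?thesis using bnd by simp
  next
    case False
    then have uS: "u \<in> S'" using u by auto
    have "{y\<in>?S. E u y} = {y\<in>S'. E u y}" using False by auto
    then show ?thesis using S'(2) uS unfolding k_sparse_def by simp
  qed
qed


lemma GR:
  assumes finV: "finite V" and sym: "\<And>x y. E x y \<Longrightarrow> E y x" and irr: "\<And>x. \<not> E x x"
    and cp: "cacP E V" and k2: "2 \<le> k"
    and u0: "u0 \<in> V" "k + 1 \<le> dg E V u0"
  shows "\<exists>x W. good_red E V k x W"
proof -
  define cand where "cand = (\<lambda>(p, Q). p \<in> V \<and> (\<exists>q\<in>V. q \<noteq> p \<and> E p q \<and> Q = compo E (V - {p}) q)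
      \<and> (\<exists>h\<in>Q. k + 1 \<le> dg E V h))"
  obtain q0 where q0: "q0 \<in> V" "E u0 q0"
  proof -
    have "nb E V u0 \<noteq> {}" using u0 unfolding dg_def by auto
    then show ?thesis using that unfolding nb_def by auto
  qed
  have "cand (q0, compo E (V - {q0}) u0)"
    unfolding cand_def compo_def using q0 u0 irr sym by (auto intro!: bexI[of _ u0])
  from ex_has_least_nat[of cand _ "\<lambda>pq. card (snd pq)", OF this]
  obtain pq where cpq: "cand pq" and minpq: "\<And>pq'. cand pq' \<Longrightarrow> card (snd pq) \<le> card (snd pq')" by blast
  obtain p Q where pqdef: "pq = (p, Q)" by (cases pq)
  have pV: "p \<in> V" using cpq pqdef unfolding cand_def by auto
  obtain q where q: "q \<in> V" "q \<noteq> p" "E p q" "Q = compo E (V - {p}) q"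
    using cpq pqdef unfolding cand_def by auto
  obtain v where vQ: "v \<in> Q" and vhigh: "k + 1 \<le> dg E V v"
    using cpq pqdef unfolding cand_def by auto
  have QV: "Q \<subseteq> V - {p}" using q(4) unfolding compo_def by auto
  have finQ: "finite Q" using QV finV finite_subset by blast
  have minQ: "\<And>p' Q'. cand (p', Q') \<Longrightarrow> card Q \<le> card Q'" using minpq pqdef by fastforce
  have hlow: "dg E V w \<le> k" if u: "u \<in> Q" and w: "w \<in> hang E V p u" for u w
  proof (rule ccontr)
    assume "\<not> dg E V w \<le> k"
    then have wh: "k + 1 \<le> dg E V w" by simp
    obtain a where a: "a \<in> V - {u}" "E u a" "\<not> conn E (V - {u}) a p" "w \<in> compo E (V - {u}) a"
      using w unfolding hang_def by blast
    have uV: "u \<in> V" "u \<noteq> p" using u QV by auto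
    have "cand (u, compo E (V - {u}) a)" unfolding cand_def using uV a wh by auto
    then have cle: "card Q \<le> card (compo E (V - {u}) a)" by (rule minQ)
    have ap: "a \<noteq> p" using a(3) by auto
    have sub: "compo E (V - {u}) a \<subseteq> Q"
    proof
      fix z assume z: "z \<in> compo E (V - {u}) a"
      then have zc: "conn E (V - {u}) a z" "z \<in> V - {u}" unfolding compo_def by auto
      have "\<And>y. conn E (V - {u}) a y \<Longrightarrow> y \<in> - {p}" using a(3) by auto
      then have "conn E ((V - {u}) \<inter> - {p}) a z" using zc(1) by (rule conn_restrict[rotated])
      then have c1: "conn E (V - {p}) a z" by (rule conn_mono) auto
      have c2: "conn E (V - {p}) q u" using u q(4) unfolding compo_def by auto
      have c3: "conn E (V - {p}) u a" using uV a(1,2) ap by (intro conn_edge) auto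
      have "z \<noteq> p" using zc(1) a(3) by auto
      then show "z \<in> Q" using q(4) zc(2) conn_trans[OF c2 conn_trans[OF c3 c1]] unfolding compo_def by auto
    qed
    moreover have "u \<notin> compo E (V - {u}) a" unfolding compo_def by auto
    ultimately have "compo E (V - {u}) a \<subset> Q" using u by blast
    then have "card (compo E (V - {u}) a) < card Q" using finQ by (rule psubset_card_mono[rotated])
    then show False using cle by simp
  qed
  define R where "R = (\<lambda>u. compo E (V - {u}) p)"
  have H2: "y = u \<or> y \<in> hang E V p u" if h: "w \<in> hang E V p u" "y \<in> V" "E w y" for u w y
  proof (cases "y = u")
    case False
    obtain a where a: "a \<in> V - {u}" "E u a" "\<not> conn E (V - {u}) a p" "w \<in> compo E (V - {u}) a"
      using h(1) unfolding hang_def by blast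
    have aw: "conn E (V - {u}) a w" "w \<in> V - {u}" using a(4) unfolding compo_def by auto
    have "conn E (V - {u}) w y" using h False aw(2) by (intro conn_edge) auto
    then have "y \<in> compo E (V - {u}) a" unfolding compo_def using h(2) False conn_trans[OF aw(1)] by blast
    then show ?thesis unfolding hang_def using a by blast
  qed simp
  have H3: "a \<in> hang E V p u \<or> a \<in> R u" if "u \<in> V" "a \<in> V" "E u a" for u a
  proof (cases "conn E (V - {u}) a p")
    case True
    have "a \<noteq> u" using that irr by auto
    then show ?thesis using conn_sym[OF sym True] that unfolding R_def compo_def by blast
  next
    case False
    have "a \<noteq> u" using that irr by auto
    then show ?thesis using False that unfolding hang_def compo_def by auto
  qed
  have H5: "hang E V p u \<inter> R u = {}" for u
  proof (rule ccontr)
    assume "hang E V p u \<inter> R u \<noteq> {}"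
    then obtain w a where a: "a \<in> V - {u}" "\<not> conn E (V - {u}) a p" "conn E (V - {u}) a w"
        and pw: "conn E (V - {u}) p w"
      unfolding hang_def R_def compo_def by blast
    then show False using conn_trans[OF a(3) conn_sym[OF sym pw]] by simp
  qed
  have hangV: "hang E V p u \<subseteq> V - {u}" for u unfolding hang_def compo_def by auto
  have finH: "finite (hang E V p u)" for u using hangV finV finite_subset by blast
  have H4: "card (nb E V u \<inter> R u) \<le> 2" if "u \<in> Q" for u
  proof -
    have uV: "u \<in> V" "u \<noteq> p" using that QV by auto
    have "R u \<subseteq> V - {u}" unfolding R_def compo_def by auto
    moreover have "connected_on E (R u)" unfolding R_def compo_def by (rule comp_connected[OF sym])
    ultimately have "card {a\<in>R u. E u a} \<le> 2" using factA[of E V u "R u", OF sym finV cp uV(1)] by blast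
    moreover have "nb E V u \<inter> R u = {a\<in>R u. E u a}" unfolding nb_def R_def compo_def by auto
    ultimately show ?thesis by simp
  qed
  have Hdeg: "dg E V u \<le> card (nb E V u \<inter> hang E V p u) + card (nb E V u \<inter> R u)" if "u \<in> Q" for u
  proof -
    have "nb E V u \<subseteq> (nb E V u \<inter> hang E V p u) \<union> (nb E V u \<inter> R u)"
      using H3 that QV unfolding nb_def by auto
    then have "dg E V u \<le> card ((nb E V u \<inter> hang E V p u) \<union> (nb E V u \<inter> R u))"
      unfolding dg_def using finV by (intro card_mono) (auto simp: nb_def)
    also have "\<dots> \<le> card (nb E V u \<inter> hang E V p u) + card (nb E V u \<inter> R u)" by (rule card_Un_le)
    finally show ?thesis .
  qed
  have Hdeg2: "dg E V u \<le> card (hang E V p u) + 2" if "u \<in> Q" for u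
  proof -
    have "card (nb E V u \<inter> hang E V p u) \<le> card (hang E V p u)" using finH by (intro card_mono) auto
    then show ?thesis using Hdeg[OF that] H4[OF that] by simp
  qed
  have vV: "v \<in> V" "v \<noteq> p" using vQ QV by auto
  show ?thesis
  proof (cases "k \<le> card (hang E V p v)")
    case True
    have "good_red E V k v (insert v (hang E V p v))"
      by (rule goodA[OF finV sym vV(1) hangV]) (use hlow[OF vQ] H2 True in auto)
    then show ?thesis by blast
  next
    case False
    let ?H = "hang E V p v"
    let ?N = "nb E V v"
    have c1: "card (?N \<inter> ?H) \<le> card ?H" using finH by (intro card_mono) auto
    have c2: "card (?N \<inter> R v) \<le> 2" by (rule H4[OF vQ])
    have c3: "dg E V v \<le> card (?N \<inter> ?H) + card (?N \<inter> R v)" by (rule Hdeg[OF vQ])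
    have NR2: "card (?N \<inter> R v) = 2" using c1 c2 c3 vhigh False by linarith
    have cH: "card ?H = k - 1" using c1 c2 c3 vhigh False by linarith
    have NH: "?N \<inter> ?H = ?H"
    proof -
      have "card (?N \<inter> ?H) = card ?H" using c1 c2 c3 vhigh False by linarith
      then show ?thesis using finH by (metis card_subset_eq inf_le2)
    qed
    have Hsub: "?H \<subseteq> ?N" using NH by blast
    have dv: "dg E V v = k + 1" using c1 c2 c3 vhigh False by linarith
    obtain r r' where rr: "?N \<inter> R v = {r, r'}" "r \<noteq> r'" "r \<noteq> p"
    proof -
      obtain r1 r2 where "?N \<inter> R v = {r1, r2}" "r1 \<noteq> r2" using NR2 by (auto simp: card_2_iff)
      then show ?thesis using that by (cases "r1 = p") (auto simp: insert_commute)
    qed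
    have rN: "r \<in> V" "E v r" "r' \<in> V" "E v r'" using rr(1) unfolding nb_def by auto
    have rR: "r \<in> R v" "r' \<in> R v" using rr(1) by auto
    have rQ: "r \<in> Q"
    proof -
      have "conn E (V - {p}) q v" using vQ q(4) unfolding compo_def by auto
      moreover have "conn E (V - {p}) v r" using vV rN rr(3) by (intro conn_edge) auto
      ultimately show ?thesis using q(4) rN rr(3) conn_trans unfolding compo_def by fastforce
    qed
    have rv: "r \<noteq> v" "r' \<noteq> v" using rN irr by auto
    have r'H: "r' \<notin> ?H" "r \<notin> ?H" using rR H5 by auto
    have vH: "v \<notin> ?H" using hangV by auto
    have nbv: "y = r \<or> y = r' \<or> y \<in> ?H" if "y \<in> V" "E v y" for y
      using H3[OF vV(1) that] rr(1) that unfolding nb_def by auto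
    consider "dg E V r \<le> k" | "dg E V r = k + 1" | "k + 2 \<le> dg E V r" by linarith
    then show ?thesis
    proof cases
      case 1
      have "good_red E V k r' (insert r' (insert v ?H))"
        unfolding good_red_def
      proof (intro conjI ballI impI)
        show "r' \<in> insert r' (insert v ?H)" by simp
        show "insert r' (insert v ?H) \<subseteq> V" using rN vV hangV by auto
        have "card (insert r' (insert v ?H)) = k + 1" using r'H vH rv finH cH k2 by simp
        then show "k + 1 \<le> card (insert r' (insert v ?H))" by simp
      next
        fix u assume u: "u \<in> insert r' (insert v ?H) - {r'}"
        show "dg E (V - {r'}) u \<le> k"
        proof (cases "u = v")
          case True
          then show ?thesis using dg_minus[where V=V and x=r' and E=E and u=v, OF finV rN(3) rN(4)] dv by simp
        next
          case False
          then have "u \<in> ?H" using u by auto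
          then show ?thesis using hlow[OF vQ] dg_mono[OF finV, of E r' u] by fastforce
        qed
      next
        fix u assume u: "u \<in> V - insert r' (insert v ?H)"
          and "\<exists>w\<in>insert r' (insert v ?H) - {r'}. E u w"
        then obtain w where w: "w \<in> insert v ?H" "E u w" by auto
        have "u = r"
        proof (cases "w = v")
          case True
          then show ?thesis using nbv[of u] u w sym by auto
        next
          case False
          then have "w \<in> ?H" using w by auto
          then have "u = v \<or> u \<in> ?H" using H2[of w v u] u w sym by auto
          then show ?thesis using u by auto
        qed
        then show "dg E (V - {r'}) u \<le> k" using 1 dg_mono[OF finV, of E r' r] by simp
      qed
      then show ?thesis by blast
    next
      case 2
      let ?Hr = "hang E V p r"
      have vHr: "v \<notin> ?Hr" using hlow[OF rQ, of v] vhigh by auto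
      have disj: "?H \<inter> ?Hr = {}"
      proof (rule ccontr)
        assume "?H \<inter> ?Hr \<noteq> {}"
        then obtain w where w: "w \<in> ?H" "w \<in> ?Hr" by blast
        then have "E w v" using Hsub sym unfolding nb_def by auto
        then have "v = r \<or> v \<in> ?Hr" using H2[OF w(2) vV(1)] by simp
        then show False using vHr rv by auto
      qed
      have cHr: "k - 1 \<le> card ?Hr" using Hdeg2[OF rQ] 2 by simp
      have "good_red E V k v (insert v (?H \<union> ?Hr))"
        unfolding good_red_def
      proof (intro conjI ballI impI)
        show "v \<in> insert v (?H \<union> ?Hr)" by simp
        show "insert v (?H \<union> ?Hr) \<subseteq> V" using vV hangV by auto
        have "card (insert v (?H \<union> ?Hr)) = 1 + card ?H + card ?Hr"
          using vH vHr disj finH by (simp add: card_Un_disjoint)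
        then show "k + 1 \<le> card (insert v (?H \<union> ?Hr))" using cH cHr k2 by simp
      next
        fix u assume u: "u \<in> insert v (?H \<union> ?Hr) - {v}"
        then have "dg E V u \<le> k" using hlow[OF vQ] hlow[OF rQ] by auto
        then show "dg E (V - {v}) u \<le> k" using dg_mono[OF finV, of E v u] by simp
      next
        fix u assume u: "u \<in> V - insert v (?H \<union> ?Hr)"
          and "\<exists>w\<in>insert v (?H \<union> ?Hr) - {v}. E u w"
        then obtain w where w: "w \<in> ?H \<union> ?Hr" "E u w" by auto
        have "u = r"
        proof (cases "w \<in> ?H")
          case True
          then have "u = v \<or> u \<in> ?H" using H2[of w v u] u w sym by auto
          then show ?thesis using u by auto
        next
          case False
          then have "w \<in> ?Hr" using w by auto
          then have "u = r \<or> u \<in> ?Hr" using H2[of w r u] u w sym by auto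
          then show ?thesis using u by auto
        qed
        then show "dg E (V - {v}) u \<le> k"
          using dg_minus[where V=V and x=v and E=E and u=r, OF finV vV(1) sym[OF rN(2)]] 2 by simp
      qed
      then show ?thesis by blast
    next
      case 3
      have "k \<le> card (hang E V p r)" using Hdeg2[OF rQ] 3 by simp
      then have "good_red E V k r (insert r (hang E V p r))"
        by (intro goodA[OF finV sym rN(1) hangV]) (use hlow[OF rQ] H2 in auto)
      then show ?thesis by blast
    qed
  qed
qed


lemma arith1:
  fixes k w n s :: nat
  assumes "k + 1 \<le> w" "w \<le> n" "k + 2 \<le> n" "n - w \<le> s + (n - w - 1) div (k + 1)"
  shows "n \<le> s + (w - 1) + (n - 1) div (k + 1)"
proof (cases "n = w")
  case True
  have "(k + 1) div (k + 1) \<le> (n - 1) div (k + 1)" using assms(3) by (intro div_le_mono) simp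
  then have "1 \<le> (n - 1) div (k + 1)" by simp
  then show ?thesis using True by simp
next
  case False
  have "(n - w - 1 + (k + 1)) div (k + 1) \<le> (n - 1) div (k + 1)"
    using assms(1,2) False by (intro div_le_mono) simp
  moreover have "(n - w - 1 + (k + 1)) div (k + 1) = (n - w - 1) div (k + 1) + 1"
    by (rule div_add_self2) simp
  ultimately show ?thesis using assms False by linarith
qed

lemma F1:
  assumes "finite V" and sym: "\<And>x y. E x y \<Longrightarrow> E y x" and irr: "\<And>x. \<not> E x x"
    and "cacP E V" and k2: "2 \<le> k"
  shows "\<exists>S \<subseteq> V. k_sparse E k S \<and> card V \<le> card S + (card V - 1) div (k + 1)"
  using assms(1,4)
proof (induction "card V" arbitrary: V rule: less_induct)
  case less
  show ?case
  proof (cases "\<forall>u\<in>V. dg E V u \<le> k")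
    case True
    then have "k_sparse E k V" unfolding k_sparse_def dg_def nb_def by simp
    then show ?thesis by auto
  next
    case False
    then obtain u0 where u0: "u0 \<in> V" "k + 1 \<le> dg E V u0" by force
    obtain x W where g: "good_red E V k x W" using GR[OF less.prems(1) sym irr less.prems(2) k2 u0] by blast
    have W: "x \<in> W" "W \<subseteq> V" "k + 1 \<le> card W" using g unfolding good_red_def by auto
    have finW: "finite W" using W less.prems(1) finite_subset by blast
    let ?V' = "V - W"
    have "?V' \<subset> V" using W by blast
    then have lt: "card ?V' < card V" using less.prems(1) by (rule psubset_card_mono[rotated])
    have cp': "cacP E ?V'" using less.prems(2) unfolding cacP_def by blast
    obtain S' where S': "S' \<subseteq> ?V'" "k_sparse E k S'" "card ?V' \<le> card S' + (card ?V' - 1) div (k + 1)"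
      using less.hyps[OF lt _ cp'] less.prems(1) by blast
    let ?S = "S' \<union> (W - {x})"
    have sp: "k_sparse E k ?S" by (rule good_combine[OF less.prems(1) g S'(1,2)])
    have finS': "finite S'" using S'(1) less.prems(1) finite_subset by blast
    have cS: "card ?S = card S' + (card W - 1)"
      using S'(1) finS' finW W(1) by (subst card_Un_disjoint) auto
    have cV': "card ?V' = card V - card W" using W(2) finW by (simp add: card_Diff_subset)
    have "k + 1 \<le> card (V - {u0})"
    proof -
      have "nb E V u0 \<subseteq> V - {u0}" unfolding nb_def using irr by auto
      then have "dg E V u0 \<le> card (V - {u0})" unfolding dg_def using less.prems(1) by (intro card_mono) auto
      then show ?thesis using u0 by simp
    qed
    then have n2: "k + 2 \<le> card V" using u0(1) less.prems(1) by (simp add: card_Diff_singleton)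
    have wn: "card W \<le> card V" using W(2) less.prems(1) by (rule card_mono[rotated])
    have "card V \<le> card S' + (card W - 1) + (card V - 1) div (k + 1)"
      by (rule arith1[OF W(3) wn n2]) (use S'(3) cV' in simp)
    then show ?thesis using sp S'(1) W(2) cS by (intro exI[of _ ?S]) auto
  qed
qed


definition hubk :: "nat \<Rightarrow> nat \<Rightarrow> bool" where
  "hubk K x \<longleftrightarrow> x mod K = 2"
definition att :: "nat \<Rightarrow> nat \<Rightarrow> nat \<Rightarrow> bool" where
  "att K x y \<longleftrightarrow> \<not> hubk K x \<and> hubk K y \<and>
     (y div K = x div K \<or> (x mod K \<le> 1 \<and> x div K = Suc (y div K)))"
definition E0 :: "nat \<Rightarrow> nat \<Rightarrow> nat \<Rightarrow> bool" where
  "E0 K x y \<longleftrightarrow> att K x y \<or> att K y x"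

lemma E0_sym: "E0 K x y \<Longrightarrow> E0 K y x" unfolding E0_def by auto
lemma E0_irr: "\<not> E0 K x x" unfolding E0_def att_def by auto
lemma E0_hubs: "hubk K x \<Longrightarrow> hubk K y \<Longrightarrow> \<not> E0 K x y" unfolding E0_def att_def by auto

lemma dm_eq: "x = x div K * K + x mod K" for x K :: nat by simp

lemma mk_div: "t < K \<Longrightarrow> (i * K + t) div K = i" for t i K :: nat by simp
lemma mk_mod: "t < K \<Longrightarrow> (i * K + t) mod K = t" for t i K :: nat by simp

lemma hub_form: "hubk K y \<Longrightarrow> y = y div K * K + 2"
  unfolding hubk_def by (metis dm_eq)

lemma nonhub_nbrs:
  assumes "\<not> hubk K x" "E0 K x y"
  shows "y = x div K * K + 2 \<or>
         (x mod K \<le> 1 \<and> 1 \<le> x div K \<and> y = (x div K - 1) * K + 2)"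
proof -
  have a: "att K x y" using assms unfolding E0_def att_def by auto
  then have yh: "y = y div K * K + 2" using hub_form unfolding att_def by blast
  show ?thesis using a yh unfolding att_def by (metis diff_Suc_1 le_add1 plus_1_eq_Suc)
qed

lemma card2_le: "card {a, b} \<le> 2" by (cases "a = b") auto

lemma nonhub_deg:
  assumes "\<not> hubk K x"
  shows "card {y\<in>S. E0 K x y} \<le> 2"
proof -
  have "{y\<in>S. E0 K x y} \<subseteq> {x div K * K + 2, (x div K - 1) * K + 2}"
    using nonhub_nbrs[OF assms] by blast
  moreover have "card {x div K * K + 2, (x div K - 1) * K + 2} \<le> 2"
    by (rule card2_le)
  ultimately show ?thesis by (meson card_mono finite.emptyI finite.insertI le_trans)
qed


lemma hub_eq: "hubk K h \<Longrightarrow> hubk K y \<Longrightarrow> h div K = y div K \<Longrightarrow> h = y"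
  by (metis hub_form)

lemma cut_hub:
  assumes K: "3 \<le> K" and e: "E0 K x y" and xh: "x < h" and hy: "h < y" and hh: "hubk K h"
  shows False
proof -
  have d1: "x div K \<le> h div K" "h div K \<le> y div K" using xh hy by (simp_all add: div_le_mono)
  have hf: "h = h div K * K + 2" using hub_form[OF hh] .
  from e consider "att K x y" | "att K y x" unfolding E0_def by blast
  then show False
  proof cases
    case 1
    then have yh: "hubk K y" and c: "y div K = x div K \<or> (x mod K \<le> 1 \<and> x div K = Suc (y div K))"
      unfolding att_def by auto
    then consider "y div K = x div K" | "x mod K \<le> 1" "x div K = Suc (y div K)" by blast
    then show False
    proof cases
      case 1
      then have "h div K = y div K" using d1 by simp
      then have "h = y" using hub_eq[OF hh yh] by simp
      then show False using hy by simp
    next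
      case 2
      have "x div K \<le> y div K" using xh hy by (simp add: div_le_mono)
      then show False using 2 by simp
    qed
  next
    case 2
    then have xh': "hubk K x" and yn: "\<not> hubk K y" and c: "x div K = y div K \<or> (y mod K \<le> 1 \<and> y div K = Suc (x div K))"
      unfolding att_def by auto
    then consider "x div K = y div K" | "y mod K \<le> 1" "y div K = Suc (x div K)" by blast
    then show False
    proof cases
      case 1
      then have "h div K = x div K" using d1 by simp
      then have "h = x" using hub_eq[OF hh xh'] by simp
      then show False using xh by simp
    next
      case 2
      then consider "h div K = x div K" | "h div K = y div K" using d1 by linarith
      then show False
      proof cases
        case 1
        then have "h = x" using hub_eq[OF hh xh'] by simp
        then show False using xh by simp
      next
        case 3: 2
        have "y = y div K * K + y mod K" by simp
        moreover have "h = y div K * K + 2" using hf 3 by simp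
        ultimately have "y < h" using 2(1) by linarith
        then show False using hy by simp
      qed
    qed
  qed
qed


lemma mk_div': "t < K \<Longrightarrow> (i * K + t) div K = i" "t < K \<Longrightarrow> (i * K + t) mod K = t" for t i K :: nat
  by simp_all

lemma pend_deg:
  assumes "\<not> hubk K x" "\<not> x mod K \<le> 1"
  shows "card {y\<in>S. E0 K x y} \<le> 1"
proof -
  have "{y\<in>S. E0 K x y} \<subseteq> {x div K * K + 2}" using nonhub_nbrs[OF assms(1)] assms(2) by blast
  then have "card {y\<in>S. E0 K x y} \<le> card {x div K * K + 2}" by (intro card_mono) auto
  then show ?thesis by simp
qed

lemma sub2: "A \<subseteq> {p, q} \<Longrightarrow> 2 \<le> card A \<Longrightarrow> A = {p, q}"
proof -
  assume a: "A \<subseteq> {p, q}" "2 \<le> card A"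
  have "card A \<le> card {p, q}" using a(1) by (intro card_mono) auto
  moreover have "card {p, q} \<le> 2" by (rule card2_le)
  ultimately have "card A = card {p, q}" using a(2) by simp
  then show ?thesis using a(1) by (intro card_subset_eq) auto
qed

lemma cyc_E0:
  assumes K: "3 \<le> K" and finB: "finite B" and bic: "biconnected_on (E0 K) B" and c3: "3 \<le> card B"
  shows "is_cycle_on (E0 K) B"
proof -
  have sym: "\<And>x y. E0 K x y \<Longrightarrow> E0 K y x" by (rule E0_sym)
  have md: "2 \<le> card {u\<in>B. E0 K x u}" if "x \<in> B" for x using min_deg2[OF bic finB c3 that] .
  have nopend: "x mod K \<le> 1" if "x \<in> B" "\<not> hubk K x" for x
    using md[OF that(1)] pend_deg[OF that(2), of B] by fastforce
  have cutB: False if "h \<in> B" "hubk K h" "u \<in> B" "w \<in> B" "u < h" "h < w" for h u w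
  proof -
    have "connected_on (E0 K) (B - {h})" using bic that(1) unfolding biconnected_on_def by auto
    then have "conn (E0 K) (B - {h}) u w" using that unfolding connected_on_conn by auto
    from conn_boundary[OF this, of "{z. z < h}"] that(5,6)
    obtain s t where st: "s < h" "\<not> t < h" "s \<in> B - {h}" "t \<in> B - {h}" "E0 K s t" by auto
    then have "h < t" by auto
    then show False using cut_hub[OF K st(5) st(1) _ that(2)] by simp
  qed
  obtain l where l: "l \<in> B" "\<not> hubk K l" "l mod K \<le> 1"
  proof -
    obtain x where x: "x \<in> B" using c3 by fastforce
    show ?thesis
    proof (cases "hubk K x")
      case True
      have "{u\<in>B. E0 K x u} \<noteq> {}" using md[OF x] by (metis card.empty not_numeral_le_zero)
      then obtain u where u: "u \<in> B" "E0 K x u" by auto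
      then have "\<not> hubk K u" using E0_hubs True by blast
      then show ?thesis using that u nopend by blast
    next
      case False
      then show ?thesis using that x nopend by blast
    qed
  qed
  define i where "i = l div K"
  define L where "L = (i - 1) * K + 2"
  define Rh where "Rh = i * K + 2"
  define a where "a = i * K"
  define b where "b = i * K + 1"
  have nl: "{u\<in>B. E0 K l u} \<subseteq> {Rh} \<union> (if 1 \<le> i then {L} else {})"
    using nonhub_nbrs[OF l(2)] unfolding i_def L_def Rh_def by auto
  have i1: "1 \<le> i"
  proof (rule ccontr)
    assume "\<not> 1 \<le> i"
    then have "card {u\<in>B. E0 K l u} \<le> card {Rh}" using nl by (intro card_mono) auto
    then show False using md[OF l(1)] by simp
  qed
  have "{u\<in>B. E0 K l u} \<subseteq> {Rh, L}" using nl i1 by auto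
  then have "{u\<in>B. E0 K l u} = {Rh, L}" using md[OF l(1)] by (rule sub2)
  then have RhB: "Rh \<in> B" and LB: "L \<in> B" by auto
  have Kp: "0 < K" using K by simp
  have t2: "2 < K" "1 < K" using K by auto
  have RhH: "hubk K Rh" unfolding hubk_def Rh_def using mk_div'(2)[OF t2(1), of i] .
  have LH: "hubk K L" unfolding hubk_def L_def using mk_div'(2)[OF t2(1), of "i - 1"] .
  have Ld: "L div K = i - 1" unfolding L_def using mk_div'(1)[OF t2(1), of "i - 1"] .
  have ad: "a div K = i" "a mod K = 0" unfolding a_def using Kp by simp_all
  have bd: "b div K = i" "b mod K = 1" unfolding b_def using mk_div'[OF t2(2), of i] by simp_all
  have Rd: "Rh div K = i" unfolding Rh_def using mk_div'(1)[OF t2(1), of i] .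
  have ord: "L < a" "a < b" "b < Rh"
  proof -
    obtain j where j: "i = Suc j" using i1 by (cases i) auto
    show "L < a" unfolding L_def a_def j using K by simp
  qed (simp_all add: a_def b_def Rh_def)
  have aH: "\<not> hubk K a" "\<not> hubk K b" unfolding hubk_def using ad bd by simp_all
  have sub: "B \<subseteq> {L, a, b, Rh}"
  proof
    fix z assume z: "z \<in> B"
    have "\<not> z < L" using cutB[OF LB LH z RhB] ord by auto
    moreover have "\<not> Rh < z" using cutB[OF RhB RhH LB z] ord by auto
    ultimately have zr: "L \<le> z" "z \<le> Rh" by auto
    have "(i - 1) \<le> z div K" using div_le_mono[OF zr(1), of K] Ld by simp
    moreover have "z div K \<le> i" using div_le_mono[OF zr(2), of K] Rd by simp
    ultimately consider "z div K = i - 1" | "z div K = i" using i1 by linarith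
    then show "z \<in> {L, a, b, Rh}"
    proof cases
      case 1
      have zz: "z = (i - 1) * K + z mod K" using 1 by (metis dm_eq)
      then have "2 \<le> z mod K" using zr(1) unfolding L_def by linarith
      show ?thesis
      proof (cases "z mod K = 2")
        case True then show ?thesis using zz unfolding L_def by simp
      next
        case False
        then have "\<not> hubk K z" unfolding hubk_def by simp
        then show ?thesis using nopend[OF z] \<open>2 \<le> z mod K\<close> by simp
      qed
    next
      case 2
      have zz: "z = i * K + z mod K" using 2 by (metis dm_eq)
      then have "z mod K \<le> 2" using zr(2) unfolding Rh_def by linarith
      then consider "z mod K = 0" | "z mod K = 1" | "z mod K = 2" by linarith
      then show ?thesis using zz unfolding a_def b_def Rh_def by cases simp_all
    qed
  qed
  have ea: "E0 K a Rh" "E0 K b Rh" "E0 K a L" "E0 K b L"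
    unfolding E0_def att_def using aH RhH LH ad bd Rd Ld i1 by auto
  have nab: "\<not> E0 K a b" unfolding E0_def att_def using aH by auto
  have nLR: "\<not> E0 K L Rh" using E0_hubs[OF LH RhH] .
  have "{u\<in>B. E0 K L u} \<subseteq> {a, b}" using sub nLR E0_irr by auto
  moreover have "2 \<le> card {u\<in>B. E0 K L u}" using md[OF LB] .
  moreover have "card {a, b} = 2" using ord by simp
  ultimately have "{u\<in>B. E0 K L u} = {a, b}" by (intro sub2)
  then have abB: "a \<in> B" "b \<in> B" by auto
  have Beq: "B = {L, a, b, Rh}" using sub LB RhB abB by auto
  have dist: "L \<noteq> a" "L \<noteq> b" "L \<noteq> Rh" "a \<noteq> b" "a \<noteq> Rh" "b \<noteq> Rh" using ord by auto
  show ?thesis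
    unfolding is_cycle_on_def
  proof (intro conjI ballI)
    show "finite B" by (rule finB)
    show "3 \<le> card B" by (rule c3)
    show "connected_on (E0 K) B"
      unfolding connected_on_conn
    proof (intro ballI)
      have toa: "conn (E0 K) B z a" if "z \<in> B" for z
      proof -
        have c1: "conn (E0 K) B L a" "conn (E0 K) B Rh a" "conn (E0 K) B b L"
          using ea Beq sym by (auto intro!: conn_edge)
        have "z = L \<or> z = a \<or> z = b \<or> z = Rh" using that Beq by auto
        then show ?thesis using c1 conn_trans by (metis conn_refl)
      qed
      fix u w assume "u \<in> B" "w \<in> B"
      then show "conn (E0 K) B u w" using conn_trans[OF toa[of u] conn_sym[OF sym toa[of w]]] by simp
    qed
    fix v assume v: "v \<in> B"
    have "v = L \<or> v = a \<or> v = b \<or> v = Rh" using v Beq by auto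
    then show "card {u\<in>B. E0 K v u} = 2"
    proof (elim disjE)
      assume "v = L"
      then have "{u\<in>B. E0 K v u} = {a, b}" using Beq ea sym nLR E0_irr by auto
      then show ?thesis using dist by simp
    next
      assume "v = a"
      then have "{u\<in>B. E0 K v u} = {L, Rh}" using Beq ea sym nab E0_irr by auto
      then show ?thesis using dist by simp
    next
      assume "v = b"
      then have "{u\<in>B. E0 K v u} = {L, Rh}" using Beq ea sym nab E0_irr by auto
      then show ?thesis using dist by simp
    next
      assume "v = Rh"
      then have "{u\<in>B. E0 K v u} = {a, b}" using Beq ea sym nLR E0_irr by auto
      then show ?thesis using dist by simp
    qed
  qed
qed


definition En :: "nat \<Rightarrow> nat \<Rightarrow> nat \<Rightarrow> nat \<Rightarrow> bool" where
  "En K n x y \<longleftrightarrow> x < n \<and> y < n \<and> E0 K x y"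

lemma En_cactus:
  assumes K: "3 \<le> K"
  shows "cactus {..<n} (En K n)"
proof (rule cacP_cactus)
  show "simple_graph {..<n} (En K n)"
    unfolding simple_graph_def En_def using E0_sym E0_irr by blast
  show "cacP (En K n) {..<n}"
    unfolding cacP_def
  proof (intro allI impI)
    fix B assume B: "B \<subseteq> {..<n} \<and> biconnected_on (En K n) B \<and> 3 \<le> card B"
    have cong: "\<And>x y. x \<in> B \<Longrightarrow> y \<in> B \<Longrightarrow> En K n x y = E0 K x y"
      using B unfolding En_def by auto
    have finB: "finite B" using B finite_subset by blast
    have "biconnected_on (E0 K) B" using B biconnected_on_cong[of B "En K n" "E0 K"] cong by simp
    then have "is_cycle_on (E0 K) B" using cyc_E0[OF K finB] B by simp
    then show "is_cycle_on (En K n) B" using is_cycle_on_cong[of B "En K n" "E0 K"] cong by simp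
  qed
qed

lemma En_no_dense:
  assumes S: "S \<subseteq> {..<n}" "card S = i" "k + 4 \<le> i" and d: "k_dense (En K n) k S"
  shows False
proof -
  have finS: "finite S" using S finite_subset by blast
  have big: "3 \<le> card {u\<in>S. En K n v u}" if v: "v \<in> S" for v
  proof -
    have "S - {v} \<subseteq> {u\<in>S. u \<noteq> v \<and> \<not> En K n v u} \<union> {u\<in>S. En K n v u}" by auto
    then have "card (S - {v}) \<le> card ({u\<in>S. u \<noteq> v \<and> \<not> En K n v u} \<union> {u\<in>S. En K n v u})"
      using finS by (intro card_mono) auto
    also have "\<dots> \<le> card {u\<in>S. u \<noteq> v \<and> \<not> En K n v u} + card {u\<in>S. En K n v u}" by (rule card_Un_le)
    finally have "card (S - {v}) \<le> card {u\<in>S. u \<noteq> v \<and> \<not> En K n v u} + card {u\<in>S. En K n v u}" .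
    moreover have "card {u\<in>S. u \<noteq> v \<and> \<not> En K n v u} \<le> k" using d v unfolding k_dense_def by auto
    moreover have "card (S - {v}) = i - 1" using v finS S by simp
    ultimately show ?thesis using S by linarith
  qed
  have hub: "hubk K v" if v: "v \<in> S" for v
  proof (rule ccontr)
    assume "\<not> hubk K v"
    then have "card {u\<in>S. E0 K v u} \<le> 2" by (rule nonhub_deg)
    moreover have "card {u\<in>S. En K n v u} \<le> card {u\<in>S. E0 K v u}"
      using finS unfolding En_def by (intro card_mono) auto
    ultimately show False using big[OF v] by simp
  qed
  obtain v where v: "v \<in> S" using S by fastforce
  have "{u\<in>S. En K n v u} \<noteq> {}" using big[OF v] by (metis card.empty not_numeral_le_zero)
  then obtain u where u: "u \<in> S" "En K n v u" by auto
  then show False using E0_hubs[OF hub[OF v] hub[OF u(1)]] unfolding En_def by simp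
qed

lemma hub_step:
  assumes K: "K = k + 1" "2 \<le> k" and sp: "k_sparse (E0 K) k S" and SN: "S \<subseteq> {..<N}"
    and D: "D = {..<N} - S" and h: "m * K + 2 \<in> S"
    and T: "T \<subseteq> {m * K + K, m * K + K + 1}" "T \<subseteq> {..<N}" and mN: "m * K + K \<le> N"
  shows "card T \<le> card (D \<inter> {m * K, m * K + 1}) + card (D \<inter> {m * K + 3..<m * K + K}) + card (D \<inter> T)"
proof -
  let ?h = "m * K + 2"
  let ?A = "{m * K, m * K + 1}"
  let ?P = "{m * K + 3..<m * K + K}"
  let ?NB = "?A \<union> ?P \<union> T"
  have Kp: "2 < K" "1 < K" "0 < K" using K by auto
  have hh: "hubk K ?h" unfolding hubk_def using mk_div'(2)[OF Kp(1)] .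
  have hd: "?h div K = m" using mk_div'(1)[OF Kp(1)] .
  have adj: "E0 K ?h y" if y: "y \<in> ?NB" for y
  proof -
    show ?thesis
    proof (cases "y \<in> T")
      case False
      then have y1: "y \<in> ?A \<union> ?P" using y by auto
      define t where "t = y - m * K"
      have yt: "y = m * K + t" using y1 unfolding t_def by auto
      have tK: "t < K" "t \<noteq> 2" using y1 yt Kp by auto
      have "y div K = m" "y mod K = t" using yt tK(1) mk_div' by auto
      then have "att K y ?h" unfolding att_def using tK hh hd unfolding hubk_def by auto
      then show ?thesis unfolding E0_def by simp
    next
      case True
      then obtain t where yt: "y = (m + 1) * K + t" "t \<le> 1" using T(1) by auto
      have "t < K" using yt Kp by simp
      then have "y div K = m + 1" "y mod K = t" using yt mk_div'[of t K "m + 1"] by auto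
      then have "att K y ?h" unfolding att_def using yt hh hd Kp unfolding hubk_def by auto
      then show ?thesis unfolding E0_def by simp
    qed
  qed
  have finNB: "finite ?NB" using T by (auto intro: finite_subset)
  have NBN: "?NB \<subseteq> {..<N}" using T mN Kp by auto
  have "card (?NB \<inter> S) \<le> card {y\<in>S. E0 K ?h y}" using adj SN by (intro card_mono) (auto intro: finite_subset)
  also have "\<dots> \<le> k" using sp h unfolding k_sparse_def by auto
  finally have cS: "card (?NB \<inter> S) \<le> k" .
  have "?NB \<subseteq> (?NB \<inter> S) \<union> (?NB \<inter> D)" using NBN D by auto
  then have "card ?NB \<le> card ((?NB \<inter> S) \<union> (?NB \<inter> D))"
    using finNB by (intro card_mono) auto
  also have "\<dots> \<le> card (?NB \<inter> S) + card (?NB \<inter> D)" by (rule card_Un_le)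
  finally have "card ?NB \<le> card (?NB \<inter> S) + card (?NB \<inter> D)" .
  moreover have "card ?NB = 2 + (K - 3) + card T"
  proof -
    have d1: "?A \<inter> ?P = {}" by auto
    have d2: "(?A \<union> ?P) \<inter> T = {}" using T(1) Kp by auto
    have "card ?A = 2" by simp
    moreover have "card ?P = K - 3" by simp
    moreover have "finite T" using T(1) finite_subset by blast
    ultimately show ?thesis using d1 d2 by (simp add: card_Un_disjoint)
  qed
  moreover have "card (?NB \<inter> D) \<le> card (D \<inter> ?A) + card (D \<inter> ?P) + card (D \<inter> T)"
  proof -
    have e: "?NB \<inter> D = (D \<inter> ?A) \<union> (D \<inter> ?P) \<union> (D \<inter> T)" by auto
    have "card (?NB \<inter> D) \<le> card ((D \<inter> ?A) \<union> (D \<inter> ?P)) + card (D \<inter> T)"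
      unfolding e by (rule card_Un_le)
    moreover have "card ((D \<inter> ?A) \<union> (D \<inter> ?P)) \<le> card (D \<inter> ?A) + card (D \<inter> ?P)"
      by (rule card_Un_le)
    ultimately show ?thesis by linarith
  qed
  ultimately show ?thesis using cS K by linarith
qed


lemma LB:
  assumes K: "K = k + 1" "2 \<le> k" and SN: "S \<subseteq> {..<N}" and sp: "k_sparse (E0 K) k S" and N1: "1 \<le> N"
  shows "card S + (N - 1) div K \<le> N"
proof -
  define D where "D = {..<N} - S"
  define X where "X = (\<lambda>m. card (D \<inter> {..<m * K}))"
  define A where "A = (\<lambda>m. card (D \<inter> {m * K, m * K + 1}))"
  define P where "P = (\<lambda>m. card (D \<inter> {m * K + 3..<m * K + K}))"
  define Hd where "Hd = (\<lambda>m. card (D \<inter> {m * K + 2}))"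
  have Kp: "3 \<le> K" using K by simp
  have finD: "finite D" unfolding D_def by simp
  have Xs: "X (Suc m) = X m + A m + Hd m + P m" for m
  proof -
    have e: "D \<inter> {..<Suc m * K} = (D \<inter> {..<m * K}) \<union> (D \<inter> {m * K, m * K + 1}) \<union> (D \<inter> {m * K + 2}) \<union> (D \<inter> {m * K + 3..<m * K + K})"
      using Kp by auto
    have "card (D \<inter> {..<Suc m * K}) = X m + A m + Hd m + P m"
      unfolding e X_def A_def Hd_def P_def using finD
      by (subst card_Un_disjoint, simp, simp, force)+ simp
    then show ?thesis unfolding X_def by simp
  qed
  have Hd1: "Hd m \<le> 1" for m
  proof -
    have "card (D \<inter> {m * K + 2}) \<le> card {m * K + 2}" by (intro card_mono) auto
    then show ?thesis unfolding Hd_def by simp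
  qed
  have HdS: "Hd m = 0 \<Longrightarrow> m * K + 2 < N \<Longrightarrow> m * K + 2 \<in> S" for m
    unfolding Hd_def D_def by auto
  have step: "2 \<le> A m + P m + A (Suc m)" if "Hd m = 0" "Suc m * K + 2 \<le> N" for m
  proof -
    have e: "Suc m * K = m * K + K" by simp
    have "card {m * K + K, m * K + K + 1} \<le> card (D \<inter> {m * K, m * K + 1}) + card (D \<inter> {m * K + 3..<m * K + K}) + card (D \<inter> {m * K + K, m * K + K + 1})"
      by (rule hub_step[OF K sp SN D_def HdS[OF that(1)]]) (use that(2) e Kp in auto)
    then show ?thesis unfolding A_def P_def e by simp
  qed
  have claim: "m * K + 2 \<le> N \<Longrightarrow> 2 * m \<le> 2 * X m + A m" for m
  proof (induction m)
    case 0 then show ?case by simp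
  next
    case (Suc m)
    have mN: "m * K + 2 \<le> N" using Suc.prems by simp
    have IH: "2 * m \<le> 2 * X m + A m" using Suc.IH[OF mN] .
    show ?case
    proof (cases "Hd m = 0")
      case False
      then have "Hd m = 1" using Hd1[of m] by simp
      then show ?thesis using Xs[of m] IH by simp
    next
      case True
      have "2 \<le> A m + P m + A (Suc m)" using step[OF True Suc.prems] .
      then show ?thesis using Xs[of m] IH True by simp
    qed
  qed
  define q where "q = (N - 1) div K"
  have qK: "q * K \<le> N - 1" unfolding q_def by (simp add: div_times_less_eq_dividend)
  have cD: "card D = N - card S" unfolding D_def using SN by (simp add: card_Diff_subset finite_subset)
  have "q \<le> card D"
  proof (cases "q * K + 2 \<le> N")
    case True
    have "2 * q \<le> 2 * X q + A q" using claim[OF True] .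
    moreover have "X q + A q \<le> card D"
    proof -
      have "(D \<inter> {..<q * K}) \<inter> (D \<inter> {q * K, q * K + 1}) = {}" by auto
      then have "X q + A q = card ((D \<inter> {..<q * K}) \<union> (D \<inter> {q * K, q * K + 1}))"
        unfolding X_def A_def using finD by (simp add: card_Un_disjoint)
      also have "\<dots> \<le> card D" using finD by (intro card_mono) auto
      finally show ?thesis .
    qed
    ultimately show ?thesis by simp
  next
    case False
    then have Nq: "N = q * K + 1" using qK N1 by simp
    show ?thesis
    proof (cases q)
      case 0 then show ?thesis by simp
    next
      case (Suc m)
      have mN: "m * K + 2 \<le> N" using Nq Suc Kp by simp
      have IH: "2 * m \<le> 2 * X m + A m" using claim[OF mN] .
      define c where "c = card (D \<inter> {Suc m * K})"
      have "X (Suc m) + c \<le> card D"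
      proof -
        have "(D \<inter> {..<Suc m * K}) \<inter> (D \<inter> {Suc m * K}) = {}" by auto
        then have "X (Suc m) + c = card ((D \<inter> {..<Suc m * K}) \<union> (D \<inter> {Suc m * K}))"
          unfolding X_def c_def using finD by (simp add: card_Un_disjoint)
        also have "\<dots> \<le> card D" using finD by (intro card_mono) auto
        finally show ?thesis .
      qed
      moreover have "1 \<le> 2 * Hd m + A m + P m + c"
      proof (cases "Hd m = 0")
        case False then show ?thesis by simp
      next
        case True
        have e: "Suc m * K = m * K + K" by simp
        have "card {m * K + K} \<le> card (D \<inter> {m * K, m * K + 1}) + card (D \<inter> {m * K + 3..<m * K + K}) + card (D \<inter> {m * K + K})"
          by (rule hub_step[OF K sp SN D_def HdS[OF True]]) (use Nq Suc e Kp in auto)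
        then show ?thesis unfolding A_def P_def c_def e by simp
      qed
      ultimately show ?thesis using Xs[of m] IH Suc by linarith
    qed
  qed
  moreover have "card S \<le> N" using SN card_mono[of "{..<N}" S] by simp
  ultimately show ?thesis using cD unfolding q_def by linarith
qed


lemma k_sparse_mono: "k_sparse E k S \<Longrightarrow> T \<subseteq> S \<Longrightarrow> finite S \<Longrightarrow> k_sparse E k T"
  unfolding k_sparse_def
proof (intro ballI)
  fix v assume a: "\<forall>v\<in>S. card {u \<in> S. E v u} \<le> k" "T \<subseteq> S" "finite S" "v \<in> T"
  have "card {u \<in> T. E v u} \<le> card {u \<in> S. E v u}" using a by (intro card_mono) auto
  moreover have "v \<in> S" using a by auto
  ultimately show "card {u \<in> T. E v u} \<le> k" using a(1) by fastforce
qed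

theorem theorem4p3:
  fixes i j k :: nat
  assumes "j \<ge> 2" and "k \<ge> 2" and "i \<ge> k + 4"
  shows "ramsey_class cactus k i j = j - 1 + nat \<lceil>real (j - 1) / real k\<rceil>"
proof -
  define c where "c = nat \<lceil>real (j - 1) / real k\<rceil>"
  define n0 where "n0 = j - 1 + c"
  define K where "K = k + 1"
  have kpos: "0 < real k" using assms(2) by simp
  have rpos: "0 < real (j - 1) / real k" using assms(1,2) by simp
  have cge: "0 \<le> \<lceil>real (j - 1) / real k\<rceil>" using rpos by linarith
  have creal: "real c = of_int \<lceil>real (j - 1) / real k\<rceil>" unfolding c_def using cge by simp
  have c1: "1 \<le> c"
  proof -
    have "0 < \<lceil>real (j - 1) / real k\<rceil>" using rpos using zero_less_ceiling by blast
    then have "0 < c" unfolding c_def using zero_less_nat_eq by blast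
    then show ?thesis by simp
  qed
  have cup: "j - 1 \<le> c * k"
  proof -
    have "real (j - 1) / real k \<le> real c" using creal ceiling_correct[of "real (j - 1) / real k"] by linarith
    then have "real (j - 1) \<le> real c * real k" using kpos by (simp add: divide_le_eq)
    then show ?thesis by (metis of_nat_le_iff of_nat_mult)
  qed
  have clow: "(c - 1) * k < j - 1"
  proof -
    have "real c - 1 < real (j - 1) / real k" using creal ceiling_correct[of "real (j - 1) / real k"] by linarith
    then have "(real c - 1) * real k < real (j - 1)" using kpos by (simp add: less_divide_eq)
    moreover have "real (c - 1) = real c - 1" using c1 by simp
    ultimately have "real ((c - 1) * k) < real (j - 1)" by simp
    then show ?thesis by (simp only: of_nat_less_iff)
  qed
  have ck: "c * k = (c - 1) * k + k"
  proof -
    obtain d where "c = Suc d" using c1 by (cases c) auto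
    then show ?thesis by simp
  qed
  obtain d where cd: "c = Suc d" using c1 by (cases c) auto
  have dk: "d * k \<le> j - 2" "j - 1 \<le> d * k + k" using cup clow cd by simp_all
  have div1: "(n0 - 1) div K = c - 1"
  proof (rule div_nat_eqI)
    show "K * (c - 1) \<le> n0 - 1" using dk cd unfolding n0_def K_def by (simp add: algebra_simps)
    show "n0 - 1 < K * Suc (c - 1)" using dk cd assms(1) unfolding n0_def K_def by (simp add: algebra_simps)
  qed
  have div2: "(n0 - 1 - 1) div K = c - 1"
  proof (rule div_nat_eqI)
    show "K * (c - 1) \<le> n0 - 1 - 1" using dk cd assms(1) unfolding n0_def K_def by (simp add: algebra_simps)
    show "n0 - 1 - 1 < K * Suc (c - 1)" using dk cd assms(1) unfolding n0_def K_def by (simp add: algebra_simps)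
  qed
  have K3: "3 \<le> K" using assms(2) unfolding K_def by simp
  let ?P = "\<lambda>n. \<forall>E. simple_graph {..<n} E \<and> cactus {..<n} E \<longrightarrow>
      (\<exists>S\<subseteq>{..<n}. card S = i \<and> k_dense E k S) \<or>
      (\<exists>S\<subseteq>{..<n}. card S = j \<and> k_sparse E k S)"
  have Pn0: "?P n0"
  proof (intro allI impI)
    fix E assume a: "simple_graph {..<n0} E \<and> cactus {..<n0} E"
    have sym: "\<And>x y. E x y \<Longrightarrow> E y x" and irr: "\<And>x. \<not> E x x"
      using a unfolding simple_graph_def by auto
    have cp: "cacP E {..<n0}" using a cactus_cacP by blast
    obtain S where S: "S \<subseteq> {..<n0}" "k_sparse E k S" "card {..<n0} \<le> card S + (card {..<n0} - 1) div (k + 1)"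
      using F1[of "{..<n0}" E k, OF _ sym irr cp assms(2)] by auto
    have "j \<le> card S" using S(3) div1 c1 unfolding K_def n0_def by simp
    then obtain T where T: "T \<subseteq> S" "card T = j" by (meson obtain_subset_with_card_n)
    have "finite S" using S(1) finite_subset by blast
    then have "k_sparse E k T" using k_sparse_mono S(2) T(1) by blast
    then show "(\<exists>S\<subseteq>{..<n0}. card S = i \<and> k_dense E k S) \<or> (\<exists>S\<subseteq>{..<n0}. card S = j \<and> k_sparse E k S)"
      using T S(1) by blast
  qed
  have notP: "\<not> ?P n" if n: "n < n0" for n
  proof
    assume Pn: "?P n"
    have cac: "cactus {..<n} (En K n)" by (rule En_cactus[OF K3])
    then have sg: "simple_graph {..<n} (En K n)" unfolding cactus_def by simp
    from Pn sg cac consider (d) S where "S \<subseteq> {..<n}" "card S = i" "k_dense (En K n) k S"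
      | (s) S where "S \<subseteq> {..<n}" "card S = j" "k_sparse (En K n) k S" by blast
    then show False
    proof cases
      case d
      then show False using En_no_dense[of S n i k K] assms(3) by blast
    next
      case s
      have sp: "k_sparse (E0 K) k S"
      proof -
        have "\<And>v. v \<in> S \<Longrightarrow> {u \<in> S. En K n v u} = {u \<in> S. E0 K v u}" using s(1) unfolding En_def by auto
        then show ?thesis using s(3) unfolding k_sparse_def by simp
      qed
      have SN: "S \<subseteq> {..<n0 - 1}" using s(1) n by auto
      have "card S + (n0 - 1 - 1) div K \<le> n0 - 1"
        by (rule LB[OF K_def assms(2) SN sp]) (use assms(1) n0_def c1 in simp)
      then show False using s(2) div2 c1 assms(1) unfolding n0_def by linarith
    qed
  qed
  have "(LEAST n. ?P n) = n0"
  proof (rule Least_equality)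
    show "?P n0" by (rule Pn0)
    fix m :: nat assume "?P m"
    then show "n0 \<le> m" using notP by (meson not_le)
  qed
  then show ?thesis unfolding ramsey_class_def n0_def c_def by simp
qed


end
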